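(* Let $\mathcal R_0(p)_i=\sum_{k,\ell\ge0,\ \min\{k,\ell\}\le i\le\max\{k,\ell\}}\frac{p_kp_\ell}{1+|k-\ell|}$ for $p\in\mathcal M_1^+$. A probability measure $p\in\mathcal M_1^+$ is a fixed point of $\mathcal R_0$ if and only if its mean $m=\sum_{k\ge0}k\,p_k$ is finite, $p_{\lfloor m\rfloor}=\lfloor m\rfloor+1-m$, $p_{\lceil m\rceil}=m+1-\lceil m\rceil$, and $p_k=0$ for all other $k$ (including the case that $m$ is an integer and $p_m=1$).
   Context: $\mathcal M_1^+$ is the set of probability measures on $\mathbb N_0$, identified with nonnegative sequences $(p_k)_{k\ge0}$ summing to $1$. *)

theory Defs
  imports "HOL-Analysis.Analysis"
begin

definition prob_seq :: "(nat \<Rightarrow> real) \<Rightarrow> bool" where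
  "prob_seq p \<longleftrightarrow> (\<forall>k. p k \<ge> 0) \<and> p sums 1"

text \<open>The operator R_0; the double series has nonnegative terms bounded by p_k p_l,
  so it is (absolutely) summable for p a probability sequence.\<close>
definition R0 :: "(nat \<Rightarrow> real) \<Rightarrow> nat \<Rightarrow> real" where
  "R0 p i = (\<Sum>\<^sub>\<infinity>(k, l) \<in> {(k, l). min k l \<le> i \<and> i \<le> max k l}.
              p k * p l / (1 + \<bar>real k - real l\<bar>))"

end

theory Submission
  imports Defs
begin

lemma R0_finite_support:
  assumes "finite S" "\<And>k. k \<notin> S \<Longrightarrow> p k = 0"
  shows "R0 p i = (\<Sum>x\<in>{(k, l). min k l \<le> i \<and> i \<le> max k l} \<inter> (S \<times> S).
            (case x of (k,l) \<Rightarrow> p k * p l / (1 + \<bar>real k - real l\<bar>)))"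
proof -
  have "R0 p i = infsum (\<lambda>(k,l). p k * p l / (1 + \<bar>real k - real l\<bar>))
          ({(k, l). min k l \<le> i \<and> i \<le> max k l} \<inter> (S \<times> S))"
    unfolding R0_def
    by (rule infsum_cong_neutral) (auto simp: assms(2), (meson assms(2))+)
  then show ?thesis using assms(1) by simp
qed

lemma backward:
  assumes "\<And>k. k \<noteq> a \<and> k \<noteq> Suc a \<Longrightarrow> p k = 0" "p a + p (Suc a) = 1"
  shows "R0 p i = p i"
proof -
  let ?S = "{a, Suc a}"
  let ?f = "\<lambda>x. case x of (k,l) \<Rightarrow> p k * p l / (1 + \<bar>real k - real l\<bar>)"
  have R: "R0 p i = (\<Sum>x\<in>{(k, l). min k l \<le> i \<and> i \<le> max k l} \<inter> (?S \<times> ?S). ?f x)"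
    by (rule R0_finite_support) (use assms(1) in auto)
  consider "i = a" | "i = Suc a" | "i \<noteq> a \<and> i \<noteq> Suc a" by blast
  then show ?thesis
  proof cases
    case 1
    have "{(k, l). min k l \<le> i \<and> i \<le> max k l} \<inter> (?S \<times> ?S) = {(a,a),(a,Suc a),(Suc a,a)}"
      using 1 by auto
    then have "R0 p i = p a * p a + p a * p (Suc a) / 2 + p (Suc a) * p a / 2"
      using R by simp
    also have "\<dots> = p a * (p a + p (Suc a))" by (simp add: field_simps)
    finally show ?thesis using 1 assms(2) by simp
  next
    case 2
    have "{(k, l). min k l \<le> i \<and> i \<le> max k l} \<inter> (?S \<times> ?S) = {(Suc a,Suc a),(a,Suc a),(Suc a,a)}"
      using 2 by auto
    then have "R0 p i = p (Suc a) * p (Suc a) + p a * p (Suc a) / 2 + p (Suc a) * p a / 2"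
      using R by simp
    also have "\<dots> = p (Suc a) * (p a + p (Suc a))" by (simp add: field_simps)
    finally show ?thesis using 2 assms(2) by simp
  next
    case 3
    have "{(k, l). min k l \<le> i \<and> i \<le> max k l} \<inter> (?S \<times> ?S) = {}"
      using 3 by auto
    then show ?thesis using R 3 assms(1) by simp
  qed
qed

lemma two_point_sum:
  assumes "prob_seq p" "\<And>k. k \<noteq> a \<and> k \<noteq> Suc a \<Longrightarrow> p k = 0"
  shows "p a + p (Suc a) = 1"
proof -
  have "p sums (\<Sum>n\<in>{a, Suc a}. p n)"
    by (rule sums_finite) (use assms(2) in auto)
  then have "p sums (p a + p (Suc a))" by simp
  moreover have "p sums 1" using assms(1) by (simp add: prob_seq_def)
  ultimately show ?thesis using sums_unique2 by blast
qed

lemma rhs_iff: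
  fixes p :: "nat \<Rightarrow> real"
  assumes "prob_seq p"
  shows "(summable (\<lambda>k. real k * p k) \<and>
     (let m = (\<Sum>k. real k * p k) in
        p (nat \<lfloor>m\<rfloor>) = of_int \<lfloor>m\<rfloor> + 1 - m \<and>
        p (nat \<lceil>m\<rceil>) = m + 1 - of_int \<lceil>m\<rceil> \<and>
        (\<forall>k. k \<noteq> nat \<lfloor>m\<rfloor> \<and> k \<noteq> nat \<lceil>m\<rceil> \<longrightarrow> p k = 0)))
   \<longleftrightarrow> (\<exists>a. \<forall>k. k \<noteq> a \<and> k \<noteq> Suc a \<longrightarrow> p k = 0)" (is "?lhs \<longleftrightarrow> ?rhs")
proof
  assume H: ?lhs
  define m where "m = (\<Sum>k. real k * p k)"
  have nn: "\<And>k. p k \<ge> 0" using assms by (simp add: prob_seq_def)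
  have "m \<ge> 0" unfolding m_def using H nn by (intro suminf_nonneg) auto
  have "\<lceil>m\<rceil> = \<lfloor>m\<rfloor> \<or> \<lceil>m\<rceil> = \<lfloor>m\<rfloor> + 1"
    by (metis ceiling_altdef ceiling_diff_floor_le_1 floor_le_ceiling le_less not_less zless_add1_eq)
  then have "nat \<lceil>m\<rceil> = nat \<lfloor>m\<rfloor> \<or> nat \<lceil>m\<rceil> = Suc (nat \<lfloor>m\<rfloor>)"
    using \<open>m \<ge> 0\<close> by (auto simp: nat_add_distrib)
  then show ?rhs using H unfolding m_def[symmetric] Let_def by metis
next
  assume ?rhs
  then obtain a where a: "\<And>k. k \<noteq> a \<and> k \<noteq> Suc a \<Longrightarrow> p k = 0" by blast
  have nn: "\<And>k. p k \<ge> 0" using assms by (simp add: prob_seq_def)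
  have s1: "p a + p (Suc a) = 1" using two_point_sum[OF assms] a by blast
  define t where "t = p (Suc a)"
  have pa: "p a = 1 - t" using s1 t_def by simp
  have t01: "0 \<le> t" "t \<le> 1" using nn[of a] nn[of "Suc a"] pa t_def by auto
  have sm: "(\<lambda>k. real k * p k) sums (\<Sum>n\<in>{a, Suc a}. real n * p n)"
    by (rule sums_finite) (use a in auto)
  then have summ: "summable (\<lambda>k. real k * p k)" by (rule sums_summable)
  have "(\<Sum>k. real k * p k) = real a * p a + real (Suc a) * p (Suc a)"
    using sums_unique[OF sm] by simp
  also have "\<dots> = real a + t" using pa t_def by (simp add: algebra_simps flip: distrib_left)
  finally have m: "(\<Sum>k. real k * p k) = real a + t" .
  have e: "nat (1 + int a) = Suc a" by arith
  consider "t = 1" | "t = 0" | "0 < t \<and> t < 1" using t01 by linarith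
  then show ?lhs
  proof cases
    case 1
    have f: "\<lfloor>real a + t\<rfloor> = int (Suc a)" "\<lceil>real a + t\<rceil> = int (Suc a)" using 1 by auto
    show ?thesis using summ unfolding Let_def m f using 1 pa t_def a by (auto simp: e) (metis a)
  next
    case 2
    have f: "\<lfloor>real a + t\<rfloor> = int a" "\<lceil>real a + t\<rceil> = int a" using 2 by auto
    show ?thesis using summ unfolding Let_def m f using 2 pa t_def a by auto
  next
    case 3
    have f: "\<lfloor>real a + t\<rfloor> = int a" "\<lceil>real a + t\<rceil> = int (Suc a)" using 3
      by (auto simp: floor_eq_iff ceiling_eq_iff)
    show ?thesis using summ unfolding Let_def m f using 3 pa t_def a by (auto simp: e)
  qed
qed

lemma forward:
  fixes p :: "nat \<Rightarrow> real"
  assumes P: "prob_seq p" and fx: "\<And>i. R0 p i = p i"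
  shows "\<exists>a. \<forall>k. k \<noteq> a \<and> k \<noteq> Suc a \<longrightarrow> p k = 0"
proof -
  have nn: "\<And>k. p k \<ge> 0" using P by (simp add: prob_seq_def)
  have ps: "p sums 1" using P by (simp add: prob_seq_def)
  have hs: "(p has_sum 1) UNIV" by (rule sums_nonneg_imp_has_sum[OF ps nn])
  have psum: "p summable_on UNIV" using hs by (rule has_sum_imp_summable)
  have psub: "\<And>B. p summable_on B" using summable_on_subset[OF psum] by blast
  have "\<exists>k. p k \<noteq> 0"
  proof (rule ccontr)
    assume "\<not> ?thesis"
    then have "p = (\<lambda>_. 0)" by auto
    then show False using ps sums_unique2 sums_zero by fastforce
  qed
  define a where "a = (LEAST k. p k \<noteq> 0)"
  have pa0: "p a \<noteq> 0" unfolding a_def using \<open>\<exists>k. p k \<noteq> 0\<close> by (rule LeastI_ex)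
  have below: "\<And>k. k < a \<Longrightarrow> p k = 0" unfolding a_def using not_less_Least by blast
  have pa: "p a > 0" using pa0 nn[of a] by linarith
  define f where "f = (\<lambda>(k::nat,l::nat). p k * p l / (1 + \<bar>real k - real l\<bar>))"
  define g where "g = (\<lambda>l::nat. p l / (1 + \<bar>real l - real a\<bar>))"
  have g_nn: "\<And>l. g l \<ge> 0" unfolding g_def using nn by simp
  have g_le: "\<And>l. g l \<le> p l"
  proof -
    fix l
    have "p l / (1 + \<bar>real l - real a\<bar>) \<le> p l / 1"
      by (rule divide_left_mono) (use nn in auto)
    then show "g l \<le> p l" unfolding g_def by simp
  qed
  have gsum: "\<And>A. g summable_on A"
    by (rule summable_on_comparison_test[OF summable_on_subset[OF psum]]) (use g_le g_nn in auto)
  have f1: "\<And>l. f (a,l) = p a * g l" unfolding f_def g_def by (simp add: abs_minus_commute)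
  have f2: "\<And>k. f (k,a) = p a * g k" unfolding f_def g_def by simp
  define T1 where "T1 = Pair a ` {a..}"
  define T2 where "T2 = (\<lambda>k. (k,a)) ` {a<..}"
  have i1: "infsum f T1 = p a * infsum g {a..}"
  proof -
    have "infsum f T1 = infsum (f \<circ> Pair a) {a..}" unfolding T1_def
      by (rule infsum_reindex) (auto simp: inj_on_def)
    also have "\<dots> = infsum (\<lambda>l. p a * g l) {a..}" by (simp add: f1 comp_def)
    also have "\<dots> = p a * infsum g {a..}" by (rule infsum_cmult_right[OF gsum])
    finally show ?thesis .
  qed
  have s1: "f summable_on T1"
  proof -
    have "(\<lambda>l. p a * g l) summable_on {a..}" by (rule summable_on_cmult_right[OF gsum])
    then have "(f \<circ> Pair a) summable_on {a..}" by (simp add: f1 comp_def)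
    then show ?thesis unfolding T1_def
      by (subst summable_on_reindex) (auto simp: inj_on_def)
  qed
  have i2: "infsum f T2 = p a * infsum g {a<..}"
  proof -
    have "infsum f T2 = infsum (f \<circ> (\<lambda>k. (k,a))) {a<..}" unfolding T2_def
      by (rule infsum_reindex) (auto simp: inj_on_def)
    also have "\<dots> = infsum (\<lambda>l. p a * g l) {a<..}" by (simp add: f2 comp_def)
    also have "\<dots> = p a * infsum g {a<..}" by (rule infsum_cmult_right[OF gsum])
    finally show ?thesis .
  qed
  have s2: "f summable_on T2"
  proof -
    have "(\<lambda>l. p a * g l) summable_on {a<..}" by (rule summable_on_cmult_right[OF gsum])
    then have "(f \<circ> (\<lambda>k. (k,a))) summable_on {a<..}" by (simp add: f2 comp_def)
    then show ?thesis unfolding T2_def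
      by (subst summable_on_reindex) (auto simp: inj_on_def)
  qed
  have "R0 p a = infsum f (T1 \<union> T2)"
    unfolding R0_def f_def[symmetric]
  proof (rule infsum_cong_neutral)
    fix x assume "x \<in> T1 \<union> T2 - {(k, l). min k l \<le> a \<and> a \<le> max k l}"
    then show "f x = 0" unfolding T1_def T2_def by auto
  next
    fix x assume x: "x \<in> {(k, l). min k l \<le> a \<and> a \<le> max k l} - (T1 \<union> T2)"
    obtain k l where kl: "x = (k,l)" by fastforce
    have "k < a \<or> l < a"
    proof (rule ccontr)
      assume "\<not> (k < a \<or> l < a)"
      then have "k = a \<and> a \<le> l \<or> l = a \<and> a < k" using x kl by auto
      then have "x \<in> T1 \<union> T2" unfolding T1_def T2_def kl by auto
      then show False using x by blast
    qed
    then show "f x = 0" unfolding kl f_def using below by auto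
  qed auto
  also have "\<dots> = infsum f T1 + infsum f T2"
    by (rule infsum_Un_disjoint[OF s1 s2]) (auto simp: T1_def T2_def)
  finally have R: "R0 p a = infsum f T1 + infsum f T2" .
  have ig: "infsum g {a..} = g a + infsum g {a<..}"
  proof -
    have "{a..} = insert a {a<..}" by auto
    then show ?thesis by (simp add: infsum_insert gsum)
  qed
  have ga: "g a = p a" by (simp add: g_def)
  have "R0 p a = p a * (p a + 2 * infsum g {a<..})" using R ig i1 i2
    using ga by (simp add: algebra_simps)
  then have G: "1 = p a + 2 * infsum g {a<..}" using fx[of a] pa by simp
  have "1 = infsum p UNIV" using hs by (simp add: infsumI)
  also have "\<dots> = infsum p {a..}" by (rule infsum_cong_neutral) (auto simp: below)
  also have "\<dots> = p a + infsum p {a<..}"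
  proof -
    have "{a..} = insert a {a<..}" by auto
    then show ?thesis by (simp add: infsum_insert psub)
  qed
  finally have P1: "infsum p {a<..} = 2 * infsum g {a<..}" using G by simp
  define h where "h = (\<lambda>l. p l - 2 * g l)"
  have h_nn: "\<And>l. l \<in> {a<..} \<Longrightarrow> h l \<ge> 0"
  proof -
    fix l assume "l \<in> {a<..}"
    then have d: "1 + \<bar>real l - real a\<bar> \<ge> 2" by auto
    have "2 * g l = 2 * p l / (1 + \<bar>real l - real a\<bar>)" unfolding g_def by simp
    also have "\<dots> \<le> p l"
    proof -
      have "p l * 2 \<le> p l * (1 + \<bar>real l - real a\<bar>)" by (rule mult_left_mono[OF d nn])
      then show ?thesis using d by (simp add: divide_le_eq mult.commute)
    qed
    finally show "h l \<ge> 0" unfolding h_def by simp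
  qed
  have hsum: "h summable_on {a<..}"
    by (rule summable_on_comparison_test[OF summable_on_subset[OF psum]])
       (use h_nn g_nn in \<open>auto simp: h_def\<close>)
  have "infsum p {a<..} = infsum (\<lambda>l. h l + 2 * g l) {a<..}" by (simp add: h_def)
  also have "\<dots> = infsum h {a<..} + infsum (\<lambda>l. 2 * g l) {a<..}"
    by (rule infsum_add[OF hsum summable_on_cmult_right[OF gsum]])
  also have "\<dots> = infsum h {a<..} + 2 * infsum g {a<..}"
    by (simp add: infsum_cmult_right[OF gsum])
  finally have "infsum h {a<..} = 0" using P1 by simp
  then have h0: "\<And>l. l \<in> {a<..} \<Longrightarrow> h l = 0"
    using nonneg_infsum_le_0D[OF _ hsum h_nn] by simp
  have "\<forall>k. k \<noteq> a \<and> k \<noteq> Suc a \<longrightarrow> p k = 0"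
  proof (intro allI impI)
    fix k assume k: "k \<noteq> a \<and> k \<noteq> Suc a"
    show "p k = 0"
    proof (cases "k < a")
      case True then show ?thesis by (rule below)
    next
      case False
      then have ka: "k \<ge> a + 2" using k by auto
      then have d: "1 + \<bar>real k - real a\<bar> \<ge> 3" by auto
      have "h k = 0" using h0 ka by auto
      then have "p k = 2 * p k / (1 + \<bar>real k - real a\<bar>)" unfolding h_def g_def by simp
      then have "p k * (1 + \<bar>real k - real a\<bar>) = 2 * p k" using d
        by (simp add: eq_divide_eq)
      then have "p k * (\<bar>real k - real a\<bar> - 1) = 0" by (simp add: algebra_simps)
      then show ?thesis using d by simp
    qed
  qed
  then show ?thesis by blast
qed

theorem proposition4:
  fixes p :: "nat \<Rightarrow> real"
  assumes "prob_seq p"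
  shows "(\<forall>i. R0 p i = p i) \<longleftrightarrow>
    (summable (\<lambda>k. real k * p k) \<and>
     (let m = (\<Sum>k. real k * p k) in
        p (nat \<lfloor>m\<rfloor>) = of_int \<lfloor>m\<rfloor> + 1 - m \<and>
        p (nat \<lceil>m\<rceil>) = m + 1 - of_int \<lceil>m\<rceil> \<and>
        (\<forall>k. k \<noteq> nat \<lfloor>m\<rfloor> \<and> k \<noteq> nat \<lceil>m\<rceil> \<longrightarrow> p k = 0)))"
  unfolding rhs_iff[OF assms]
proof
  assume "\<forall>i. R0 p i = p i"
  then show "\<exists>a. \<forall>k. k \<noteq> a \<and> k \<noteq> Suc a \<longrightarrow> p k = 0"
    using forward[OF assms] by blast
next
  assume "\<exists>a. \<forall>k. k \<noteq> a \<and> k \<noteq> Suc a \<longrightarrow> p k = 0"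
  then obtain a where a: "\<And>k. k \<noteq> a \<and> k \<noteq> Suc a \<Longrightarrow> p k = 0" by blast
  have "p a + p (Suc a) = 1" using two_point_sum[OF assms] a by blast
  then show "\<forall>i. R0 p i = p i" using backward[where a=a and p=p] a by blast
qed

end
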